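(* Let $n$ be prime, let $c: [n] \to [n]$ be given by $c(i) = i+1$ for $1 \le i < n$ and $c(n) = 1$, and let $w = w(1)\cdots w(n) \in \mathbb{P}^n$ be a nonconstant word. Then for $\pi \in \mathfrak{S}_n$, $\mathrm{cstd}(w) = \pi$ if and only if $w \in A(\pi, S)$ where $S = \mathrm{Des}(\pi c \pi^{-1})$.
   Context: $\mathbb{P} = \{1,2,\ldots\}$ and $\mathfrak{S}_n$ is the set of permutations of $[n]$. A word $w \in \mathbb{P}^n$ is identified with the coloring $i \mapsto w(i)$ of $[n]$. For $1 \le i \le n$ the rotation $r_i(w)$ is the word $w(i)w(i+1)\cdots w(n)w(1)\cdots w(i-1)$. When $n$ is prime and $w$ is nonconstant, the $n$ rotations are pairwise distinct, and the cyclic standardization $\mathrm{cstd}(w)$ is the unique $\pi \in \mathfrak{S}_n$ such that $r_x(w) <_{\mathrm{lex}} r_y(w)$ whenever $\pi(x) < \pi(y)$ (i.e. $\pi(i) = j$ when $r_i(w)$ is the $j$th smallest rotation in lexicographic order). For $\pi \in \mathfrak{S}_n$ and $S \subseteq [n-1]$, $A(\pi,S)$ is the set of words $w$ with $w(\pi^{-1}(1)) \le \cdots \le w(\pi^{-1}(n))$ and $w(\pi^{-1}(i)) < w(\pi^{-1}(i+1))$ for $i \in S$. $\mathrm{Des}(\sigma) = \{i \in [n-1]: \sigma(i) > \sigma(i+1)\}$. *)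

theory Defs
  imports "HOL-Combinatorics.Permutations" "HOL-Computational_Algebra.Primes"
begin

text \<open>Words of length n are functions nat => nat; only the values on {1..n} matter.
  Permutations of [n] are functions permuting {1..n} (identity elsewhere).\<close>

definition rot :: "nat \<Rightarrow> (nat \<Rightarrow> nat) \<Rightarrow> nat \<Rightarrow> nat list" where
  "rot n w i = map (\<lambda>j. w (((i - 1) + (j - 1)) mod n + 1)) [1..<n+1]"

definition cstd :: "nat \<Rightarrow> (nat \<Rightarrow> nat) \<Rightarrow> (nat \<Rightarrow> nat)" where
  "cstd n w = (THE \<pi>. \<pi> permutes {1..n} \<and>
     (\<forall>x\<in>{1..n}. \<forall>y\<in>{1..n}. \<pi> x < \<pi> y \<longrightarrow> ord_class.lexordp (rot n w x) (rot n w y)))"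

definition Aset :: "nat \<Rightarrow> (nat \<Rightarrow> nat) \<Rightarrow> nat set \<Rightarrow> (nat \<Rightarrow> nat) set" where
  "Aset n \<pi> S = {w. (\<forall>i\<in>{1..n}. w i \<ge> 1) \<and>
     (\<forall>i\<in>{1..<n}. w (inv \<pi> i) \<le> w (inv \<pi> (i+1))) \<and>
     (\<forall>i\<in>S. w (inv \<pi> i) < w (inv \<pi> (i+1)))}"

definition Des :: "nat \<Rightarrow> (nat \<Rightarrow> nat) \<Rightarrow> nat set" where
  "Des n \<sigma> = {i\<in>{1..<n}. \<sigma> i > \<sigma> (i+1)}"

definition cyc :: "nat \<Rightarrow> nat \<Rightarrow> nat" where
  "cyc n i = (if 1 \<le> i \<and> i < n then i + 1 else if i = n then 1 else i)"

end

theory Submission imports Defs "HOL-Number_Theory.Cong" begin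

lemma cyc_in: "0 < n \<Longrightarrow> x \<in> {1..n} \<Longrightarrow> cyc n x \<in> {1..n}"
  by (auto simp: cyc_def)

lemma cyc_inj: "inj_on (cyc n) {1..n}"
  by (auto simp: cyc_def inj_on_def split: if_splits)

lemma cyc_pow: "0 < n \<Longrightarrow> x \<in> {1..n} \<Longrightarrow> (cyc n ^^ t) x = ((x-1)+t) mod n + 1"
proof (induction t)
  case 0 then show ?case by auto
next
  case (Suc t)
  define m where "m = ((x-1)+t) mod n"
  have m: "m < n" using Suc.prems by (auto simp: m_def)
  have e: "(x - 1 + Suc t) mod n = (if Suc m = n then 0 else Suc m)"
    unfolding m_def by (simp add: mod_Suc)
  have "(cyc n ^^ Suc t) x = cyc n (m+1)" using Suc by (simp add: m_def)
  also have "\<dots> = (if Suc m = n then 0 else Suc m) + 1" using m by (auto simp: cyc_def)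
  finally show ?case unfolding e .
qed

lemma cyc_pow_in: "0 < n \<Longrightarrow> x \<in> {1..n} \<Longrightarrow> (cyc n ^^ t) x \<in> {1..n}"
  using cyc_pow[of n x t] by (simp add: Suc_leI)

lemma rot_len: "length (rot n w x) = n" by (simp add: rot_def)

lemma rot_nth: "0 < n \<Longrightarrow> x \<in> {1..n} \<Longrightarrow> t < n \<Longrightarrow> rot n w x ! t = w ((cyc n ^^ t) x)"
  by (simp add: rot_def cyc_pow del: upt_Suc)

lemma lex_first_diff:
  fixes xs ys :: "nat list"
  shows "length xs = length ys \<Longrightarrow> ord_class.lexordp xs ys \<longleftrightarrow> (\<exists>k<length xs. (\<forall>j<k. xs!j = ys!j) \<and> xs!k < ys!k)"
proof (induction xs arbitrary: ys)
  case Nil then show ?case by simp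
next
  case (Cons a xs)
  then obtain b zs where ys: "ys = b # zs" and l: "length xs = length zs" by (cases ys) auto
  show ?case
  proof
    assume "ord_class.lexordp (a # xs) ys"
    then have "a < b \<or> a = b \<and> ord_class.lexordp xs zs" using ys by auto
    then show "\<exists>k<length (a#xs). (\<forall>j<k. (a#xs)!j = ys!j) \<and> (a#xs)!k < ys!k"
    proof
      assume "a < b" then show ?thesis using ys by (intro exI[of _ 0]) auto
    next
      assume h: "a = b \<and> ord_class.lexordp xs zs"
      then obtain k where k: "k<length xs" "\<forall>j<k. xs!j = zs!j" "xs!k < zs!k"
        using Cons.IH[OF l] by auto
      show ?thesis using ys h k by (intro exI[of _ "Suc k"]) (auto simp: less_Suc_eq_0_disj)
    qed
  next
    assume "\<exists>k<length (a#xs). (\<forall>j<k. (a#xs)!j = ys!j) \<and> (a#xs)!k < ys!k"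
    then obtain k where k: "k<length (a#xs)" "\<forall>j<k. (a#xs)!j = ys!j" "(a#xs)!k < ys!k" by blast
    show "ord_class.lexordp (a # xs) ys"
    proof (cases k)
      case 0 then show ?thesis using k ys by auto
    next
      case (Suc m)
      have "a = b" using k(2) Suc ys by auto
      moreover have "ord_class.lexordp xs zs" using Cons.IH[OF l] k Suc ys by force
      ultimately show ?thesis using ys by auto
    qed
  qed
qed

lemma rot_inj:
  assumes p: "prime n" and nc: "\<exists>i\<in>{1..n}. \<exists>j\<in>{1..n}. w i \<noteq> w j"
    and x: "x \<in> {1..n}" and y: "y \<in> {1..n}" and eq: "rot n w x = rot n w y"
  shows "x = y"
proof (rule ccontr)
  assume ne: "x \<noteq> y"
  have n0: "0 < n" using p prime_gt_0_nat by blast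
  define g where "g s = w (s mod n + 1)" for s
  have gm: "g s = g (s mod n)" for s by (simp add: g_def)
  have h0: "g (x-1+t) = g (y-1+t)" if "t < n" for t
  proof -
    have "rot n w x ! t = rot n w y ! t" using eq by simp
    then show ?thesis using that x y n0 by (simp add: rot_nth cyc_pow g_def)
  qed
  have h: "g (x-1+t) = g (y-1+t)" for t
  proof -
    have "g (x-1+t) = g (x-1 + t mod n)" by (metis gm mod_add_right_eq)
    also have "\<dots> = g (y-1 + t mod n)" using h0 n0 by simp
    also have "\<dots> = g (y-1+t)" by (metis gm mod_add_right_eq)
    finally show ?thesis .
  qed
  have key: "\<exists>d. 0 < d \<and> d < n \<and> (\<forall>s. g s = g (s + d))"
    if a: "a \<in> {1..n}" "b \<in> {1..n}" "a < b" and hab: "\<And>t. g (a-1+t) = g (b-1+t)" for a b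
  proof (intro exI conjI allI)
    show "0 < b - a" "b - a < n" using a by auto
    fix s
    have "g s = g (s + n)" by (metis gm mod_add_self2)
    also have "s + n = a - 1 + (s + n - (a - 1))" using a by auto
    also have "g \<dots> = g (b - 1 + (s + n - (a - 1)))" by (rule hab)
    also have "b - 1 + (s + n - (a - 1)) = (s + (b - a)) + n" using a by auto
    also have "g \<dots> = g (s + (b - a))" by (metis gm mod_add_self2)
    finally show "g s = g (s + (b - a))" .
  qed
  obtain d where d: "0 < d" "d < n" "\<And>s. g s = g (s + d)"
    using ne key[OF x y] key[OF y x] h h[symmetric] by (metis linorder_neqE_nat)
  have dm: "g s = g (s + m * d)" for m s
    by (induction m) (auto simp: d(3)[symmetric] add.assoc[symmetric] add.commute[of d] intro: trans[OF _ d(3)])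
  have cop: "coprime d n"
    using p d by (metis coprime_commute dvd_imp_le not_le prime_imp_coprime)
  have all: "w i = g 0" if i: "i \<in> {1..n}" for i
  proof -
    obtain m where m: "[d * m = i - 1] (mod n)"
      using cong_solve_dvd_nat[of d n "i-1"] cop by auto
    have "i - 1 < n" using i by auto
    then have "(i - 1) mod n + 1 = i" using i by simp
    then have "w i = g (i - 1)" unfolding g_def by simp
    also have "\<dots> = g ((i-1) mod n)" by (rule gm)
    also have "(i-1) mod n = (d*m) mod n" using m by (simp add: cong_def)
    also have "g \<dots> = g (0 + m * d)" by (metis gm mult.commute add_0)
    also have "\<dots> = g 0" by (rule dm[symmetric])
    finally show ?thesis .
  qed
  then show False using nc by auto
qed

lemma rank_ex1:
  fixes R :: "nat \<Rightarrow> nat \<Rightarrow> bool"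
  assumes irr: "\<And>x. x \<in> {1..n} \<Longrightarrow> \<not> R x x"
    and tr: "\<And>x y z. x \<in> {1..n} \<Longrightarrow> y \<in> {1..n} \<Longrightarrow> z \<in> {1..n} \<Longrightarrow> R x y \<Longrightarrow> R y z \<Longrightarrow> R x z"
    and tot: "\<And>x y. x \<in> {1..n} \<Longrightarrow> y \<in> {1..n} \<Longrightarrow> x \<noteq> y \<Longrightarrow> R x y \<or> R y x"
  shows "\<exists>!\<pi>. \<pi> permutes {1..n} \<and> (\<forall>x\<in>{1..n}. \<forall>y\<in>{1..n}. \<pi> x < \<pi> y \<longrightarrow> R x y)"
proof -
  define I where "I = {1..n}"
  define r where "r x = card {y\<in>I. R y x} + 1" for x
  have rI: "r x \<in> I" if "x \<in> I" for x
  proof -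
    have "x \<notin> {y\<in>I. R y x}" using irr[of x] that unfolding I_def by simp
    then have "{y\<in>I. R y x} \<subset> I" using that by (intro psubsetI) auto
    then have "card {y\<in>I. R y x} < card I" by (intro psubset_card_mono) (auto simp: I_def)
    then show ?thesis by (simp add: I_def r_def)
  qed
  have rlt: "r x < r y" if "x \<in> I" "y \<in> I" "R x y" for x y
  proof -
    have sub: "{z\<in>I. R z x} \<subseteq> {z\<in>I. R z y}"
    proof (rule subsetI)
      fix z assume "z \<in> {z\<in>I. R z x}"
      then show "z \<in> {z\<in>I. R z y}" using tr[of z x y] that unfolding I_def by simp
    qed
    have "x \<in> {z\<in>I. R z y}" "x \<notin> {z\<in>I. R z x}" using that irr[of x] unfolding I_def by simp_all
    then have "{z\<in>I. R z x} \<subset> {z\<in>I. R z y}" using sub by (intro psubsetI) auto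
    then show ?thesis unfolding r_def by (simp add: psubset_card_mono I_def)
  qed
  have inj: "inj_on r I"
  proof (rule inj_onI)
    fix x y assume "x \<in> I" "y \<in> I" "r x = r y"
    then show "x = y" using rlt[of x y] rlt[of y x] tot[of x y] unfolding I_def by auto
  qed
  have "r ` I \<subseteq> I" using rI by auto
  moreover have "finite I" by (simp add: I_def)
  ultimately have "r ` I = I" using endo_inj_surj[of I r] inj by blast
  then have bij: "bij_betw r I I" using inj by (simp add: bij_betw_def)
  define \<pi> where "\<pi> x = (if x \<in> I then r x else x)" for x
  have "bij_betw \<pi> I I" using bij by (rule bij_betw_cong[THEN iffD1, rotated]) (simp add: \<pi>_def)
  then have perm: "\<pi> permutes I" by (rule bij_imp_permutes) (simp add: \<pi>_def)
  have prp: "\<forall>x\<in>I. \<forall>y\<in>I. \<pi> x < \<pi> y \<longrightarrow> R x y"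
  proof (intro ballI impI)
    fix x y assume xy: "x \<in> I" "y \<in> I" "\<pi> x < \<pi> y"
    show "R x y"
    proof (rule ccontr)
      assume "\<not> R x y"
      then have "x = y \<or> R y x" using tot[of x y] xy unfolding I_def by auto
      then show False using rlt[of y x] xy by (auto simp: \<pi>_def)
    qed
  qed
  have iff: "\<pi> x < \<pi> y \<longleftrightarrow> R x y"
    if p: "\<pi> permutes I" "\<forall>x\<in>I. \<forall>y\<in>I. \<pi> x < \<pi> y \<longrightarrow> R x y" and xy: "x \<in> I" "y \<in> I" for \<pi> x y
  proof
    assume "R x y"
    show "\<pi> x < \<pi> y"
    proof (rule ccontr)
      assume "\<not> \<pi> x < \<pi> y"
      moreover have "x \<noteq> y" using \<open>R x y\<close> irr[of x] xy unfolding I_def by auto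
      then have "\<pi> x \<noteq> \<pi> y" using p(1) by (metis permutes_inj injD)
      ultimately have "\<pi> y < \<pi> x" by auto
      then have "R y x" using p(2) xy by blast
      then show False using tr[of x y x] irr[of x] \<open>R x y\<close> xy unfolding I_def by auto
    qed
  qed (use p xy in auto)
  have cardf: "\<pi> x = card {y\<in>I. \<pi> y \<le> \<pi> x}" if p: "\<pi> permutes I" and x: "x \<in> I" for \<pi> x
  proof -
    have inj: "inj_on \<pi> {y\<in>I. \<pi> y \<le> \<pi> x}" using permutes_inj[OF p] by (rule inj_on_subset) simp
    have "\<pi> ` {y\<in>I. \<pi> y \<le> \<pi> x} = {z\<in>I. z \<le> \<pi> x}"
    proof -
      have im: "\<pi> ` I = I" using p by (rule permutes_image)
      show ?thesis
      proof (intro equalityI subsetI)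
        fix z assume "z \<in> \<pi> ` {y\<in>I. \<pi> y \<le> \<pi> x}"
        then obtain y where "y\<in>I" "\<pi> y \<le> \<pi> x" "z = \<pi> y" by blast
        then show "z \<in> {z\<in>I. z \<le> \<pi> x}" using permutes_in_image[OF p] by simp
      next
        fix z assume z: "z \<in> {z\<in>I. z \<le> \<pi> x}"
        then have "z \<in> \<pi> ` I" using im by simp
        then obtain y where "y\<in>I" "z = \<pi> y" by blast
        then show "z \<in> \<pi> ` {y\<in>I. \<pi> y \<le> \<pi> x}" using z by blast
      qed
    qed
    also have "{z\<in>I. z \<le> \<pi> x} = {1..\<pi> x}"
    proof -
      have "\<pi> x \<in> I" using permutes_in_image[OF p] x by simp
      then have "\<pi> x \<le> n" by (simp add: I_def)
      then show ?thesis unfolding I_def by auto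
    qed
    finally have "card (\<pi> ` {y\<in>I. \<pi> y \<le> \<pi> x}) = card {1..\<pi> x}" by (rule arg_cong)
    then have "card {y\<in>I. \<pi> y \<le> \<pi> x} = card {1..\<pi> x}" using card_image[OF inj] by argo
    then show ?thesis by simp
  qed
  show ?thesis
  proof (rule ex1I[of _ \<pi>])
    show "\<pi> permutes {1..n} \<and> (\<forall>x\<in>{1..n}. \<forall>y\<in>{1..n}. \<pi> x < \<pi> y \<longrightarrow> R x y)"
      using perm prp I_def by simp
  next
    fix \<tau> assume t: "\<tau> permutes {1..n} \<and> (\<forall>x\<in>{1..n}. \<forall>y\<in>{1..n}. \<tau> x < \<tau> y \<longrightarrow> R x y)"
    have t1: "\<tau> permutes I" "\<forall>x\<in>I. \<forall>y\<in>I. \<tau> x < \<tau> y \<longrightarrow> R x y" using t unfolding I_def by simp_all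
    show "\<tau> = \<pi>"
    proof
      fix x
      show "\<tau> x = \<pi> x"
      proof (cases "x \<in> I")
        case False then show ?thesis using permutes_not_in[OF t1(1) False] permutes_not_in[OF perm False] by simp
      next
        case True
        have le: "\<sigma> y \<le> \<sigma> x \<longleftrightarrow> y = x \<or> R y x"
          if s: "\<sigma> permutes I" "\<forall>x\<in>I. \<forall>y\<in>I. \<sigma> x < \<sigma> y \<longrightarrow> R x y" and y: "y \<in> I" for \<sigma> y
        proof -
          have "\<sigma> y = \<sigma> x \<longleftrightarrow> y = x" using s(1) by (metis permutes_inj injD)
          moreover have "\<sigma> y < \<sigma> x \<longleftrightarrow> R y x" by (rule iff[OF s y True])
          ultimately show ?thesis by linarith
        qed
        have eq: "{y\<in>I. \<tau> y \<le> \<tau> x} = {y\<in>I. \<pi> y \<le> \<pi> x}"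
        proof (rule Collect_cong)
          fix y show "(y \<in> I \<and> \<tau> y \<le> \<tau> x) = (y \<in> I \<and> \<pi> y \<le> \<pi> x)"
            using le[OF t1, of y] le[OF perm prp, of y] by blast
        qed
        have "\<tau> x = card {y\<in>I. \<tau> y \<le> \<tau> x}" by (rule cardf[OF t1(1) True])
        also have "\<dots> = card {y\<in>I. \<pi> y \<le> \<pi> x}" by (rule arg_cong[OF eq])
        also have "\<dots> = \<pi> x" by (rule cardf[OF perm True, symmetric])
        finally show ?thesis .
      qed
    qed
  qed
qed

theorem lemma2p2:
  fixes n :: nat and w \<pi> :: "nat \<Rightarrow> nat"
  assumes "prime n"
    and "\<forall>i\<in>{1..n}. w i \<ge> 1"
    and "\<exists>i\<in>{1..n}. \<exists>j\<in>{1..n}. w i \<noteq> w j"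
    and "\<pi> permutes {1..n}"
  shows "cstd n w = \<pi> \<longleftrightarrow> w \<in> Aset n \<pi> (Des n (\<pi> \<circ> cyc n \<circ> inv \<pi>))"
proof -
  note pr = assms(1) and pos = assms(2) and nc = assms(3) and perm = assms(4)
  have n0: "0 < n" using pr prime_gt_0_nat by blast
  define R where "R x y = ord_class.lexordp (rot n w x) (rot n w y)" for x y
  have irr: "\<not> R x x" for x unfolding R_def by (rule lexordp_irreflexive')
  have tr: "R x y \<Longrightarrow> R y z \<Longrightarrow> R x z" for x y z unfolding R_def by (rule lexordp_trans)
  have tot: "R x y \<or> R y x" if "x \<in> {1..n}" "y \<in> {1..n}" "x \<noteq> y" for x y
    using lexordp_linear[of "rot n w x" "rot n w y"] rot_inj[OF pr nc that(1,2)] that(3)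
    unfolding R_def by blast
  have ex1: "\<exists>!\<pi>. \<pi> permutes {1..n} \<and> (\<forall>x\<in>{1..n}. \<forall>y\<in>{1..n}. \<pi> x < \<pi> y \<longrightarrow> R x y)"
    by (rule rank_ex1) (use irr tr tot in blast)+
  have cstd_eq: "cstd n w = (THE \<pi>. \<pi> permutes {1..n} \<and> (\<forall>x\<in>{1..n}. \<forall>y\<in>{1..n}. \<pi> x < \<pi> y \<longrightarrow> R x y))"
    unfolding cstd_def R_def ..
  have lexchar: "R x y \<longleftrightarrow> (\<exists>k<n. (\<forall>j<k. w ((cyc n ^^ j) x) = w ((cyc n ^^ j) y)) \<and> w ((cyc n ^^ k) x) < w ((cyc n ^^ k) y))"
    if "x \<in> {1..n}" "y \<in> {1..n}" for x y
  proof -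
    have "R x y \<longleftrightarrow> (\<exists>k<n. (\<forall>j<k. rot n w x ! j = rot n w y ! j) \<and> rot n w x ! k < rot n w y ! k)"
      unfolding R_def using lex_first_diff[of "rot n w x" "rot n w y"] by (simp add: rot_len)
    also have "\<dots> \<longleftrightarrow> (\<exists>k<n. (\<forall>j<k. w ((cyc n ^^ j) x) = w ((cyc n ^^ j) y)) \<and> w ((cyc n ^^ k) x) < w ((cyc n ^^ k) y))"
    proof -
      have e: "rot n w z ! j = w ((cyc n ^^ j) z)" if "z \<in> {1..n}" "j < n" for z j
        using rot_nth[OF n0 that] .
      show ?thesis
      proof
        assume "\<exists>k<n. (\<forall>j<k. rot n w x ! j = rot n w y ! j) \<and> rot n w x ! k < rot n w y ! k"
        then obtain k where k: "k<n" "\<forall>j<k. rot n w x ! j = rot n w y ! j" "rot n w x ! k < rot n w y ! k" by blast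
        show "\<exists>k<n. (\<forall>j<k. w ((cyc n ^^ j) x) = w ((cyc n ^^ j) y)) \<and> w ((cyc n ^^ k) x) < w ((cyc n ^^ k) y)"
          using k e[OF that(1)] e[OF that(2)] by (intro exI[of _ k]) auto
      next
        assume "\<exists>k<n. (\<forall>j<k. w ((cyc n ^^ j) x) = w ((cyc n ^^ j) y)) \<and> w ((cyc n ^^ k) x) < w ((cyc n ^^ k) y)"
        then obtain k where k: "k<n" "\<forall>j<k. w ((cyc n ^^ j) x) = w ((cyc n ^^ j) y)" "w ((cyc n ^^ k) x) < w ((cyc n ^^ k) y)" by blast
        show "\<exists>k<n. (\<forall>j<k. rot n w x ! j = rot n w y ! j) \<and> rot n w x ! k < rot n w y ! k"
          using k e[OF that(1)] e[OF that(2)] by (intro exI[of _ k]) auto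
      qed
    qed
    finally show ?thesis .
  qed
  have first_le: "w x \<le> w y" if hh: "x \<in> {1..n}" "y \<in> {1..n}" "R x y" for x y
  proof -
    obtain k where k: "k<n" "\<forall>j<k. w ((cyc n ^^ j) x) = w ((cyc n ^^ j) y)" "w ((cyc n ^^ k) x) < w ((cyc n ^^ k) y)"
      using lexchar[OF hh(1,2)] hh(3) by blast
    show ?thesis
    proof (cases k)
      case 0 then show ?thesis using k by simp
    next
      case (Suc m) then show ?thesis using k(2)[rule_format, of 0] by simp
    qed
  qed
  have shift: "R (cyc n x) (cyc n y)" if hh: "x \<in> {1..n}" "y \<in> {1..n}" "R x y" "w x = w y" for x y
  proof -
    obtain k where k: "k<n" "\<forall>j<k. w ((cyc n ^^ j) x) = w ((cyc n ^^ j) y)" "w ((cyc n ^^ k) x) < w ((cyc n ^^ k) y)"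
      using lexchar[OF hh(1,2)] hh(3) by blast
    have "k \<noteq> 0" using k(3) hh(4) by (cases k) auto
    then obtain m where m: "k = Suc m" by (cases k) auto
    have fs: "(cyc n ^^ j) (cyc n z) = (cyc n ^^ Suc j) z" for j z
      by (simp add: funpow_Suc_right del: funpow.simps)
    have "\<exists>k<n. (\<forall>j<k. w ((cyc n ^^ j) (cyc n x)) = w ((cyc n ^^ j) (cyc n y))) \<and> w ((cyc n ^^ k) (cyc n x)) < w ((cyc n ^^ k) (cyc n y))"
      using k m unfolding fs by (intro exI[of _ m]) auto
    then show ?thesis using lexchar[OF cyc_in[OF n0 hh(1)] cyc_in[OF n0 hh(2)]] by blast
  qed
  have iffP: "\<tau> x < \<tau> y \<longleftrightarrow> R x y"
    if t: "\<tau> permutes {1..n}" "\<forall>x\<in>{1..n}. \<forall>y\<in>{1..n}. \<tau> x < \<tau> y \<longrightarrow> R x y"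
      and xy: "x \<in> {1..n}" "y \<in> {1..n}" for \<tau> x y
  proof
    assume "R x y"
    show "\<tau> x < \<tau> y"
    proof (rule ccontr)
      assume "\<not> \<tau> x < \<tau> y"
      moreover have "x \<noteq> y" using \<open>R x y\<close> irr by auto
      then have "\<tau> x \<noteq> \<tau> y" using t(1) by (metis permutes_inj injD)
      ultimately have "\<tau> y < \<tau> x" by auto
      then have "R y x" using t(2) xy by blast
      then show False using tr[of x y x] irr[of x] \<open>R x y\<close> by auto
    qed
  qed (use t xy in blast)
  define p where "p = inv \<pi>"
  have pperm: "p permutes {1..n}" unfolding p_def by (rule permutes_inv[OF perm])
  have pI: "p i \<in> {1..n}" if "i \<in> {1..n}" for i using permutes_in_image[OF pperm] that by simp
  have \<pi>I: "\<pi> i \<in> {1..n}" if "i \<in> {1..n}" for i using permutes_in_image[OF perm] that by simp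
  have \<pi>p: "\<pi> (p i) = i" for i unfolding p_def by (rule permutes_inverses(1)[OF perm])
  have p\<pi>: "p (\<pi> i) = i" for i unfolding p_def by (rule permutes_inverses(2)[OF perm])
  define \<sigma> where "\<sigma> = \<pi> \<circ> cyc n \<circ> p"
  have \<sigma>I: "\<sigma> i \<in> {1..n}" if "i \<in> {1..n}" for i
    unfolding \<sigma>_def using \<pi>I cyc_in[OF n0] pI that by simp
  have \<sigma>inj: "i = j" if "i \<in> {1..n}" "j \<in> {1..n}" "\<sigma> i = \<sigma> j" for i j
  proof -
    have "cyc n (p i) = cyc n (p j)" using that(3) unfolding \<sigma>_def
      by (metis comp_apply p\<pi>)
    then have "p i = p j" using cyc_inj[of n] pI that(1,2) by (meson inj_onD)
    then show ?thesis by (metis \<pi>p)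
  qed
  have Aset_iff: "w \<in> Aset n \<pi> (Des n (\<pi> \<circ> cyc n \<circ> inv \<pi>)) \<longleftrightarrow>
      (\<forall>i\<in>{1..<n}. w (p i) \<le> w (p (i+1))) \<and> (\<forall>i\<in>{1..<n}. \<sigma> (i+1) < \<sigma> i \<longrightarrow> w (p i) < w (p (i+1)))"
    using pos unfolding Aset_def Des_def \<sigma>_def p_def by auto
  show ?thesis
  proof
    assume c: "cstd n w = \<pi>"
    have P: "\<forall>x\<in>{1..n}. \<forall>y\<in>{1..n}. \<pi> x < \<pi> y \<longrightarrow> R x y"
      using theI'[OF ex1] c cstd_eq by simp
    have le: "w (p i) \<le> w (p (i+1))" and Rp: "R (p i) (p (i+1))" if i: "i \<in> {1..<n}" for i
    proof -
      have "i \<in> {1..n}" "i + 1 \<in> {1..n}" using i by auto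
      moreover have "\<pi> (p i) < \<pi> (p (i+1))" by (simp add: \<pi>p)
      ultimately show R: "R (p i) (p (i+1))" using P pI by blast
      show "w (p i) \<le> w (p (i+1))" by (rule first_le[OF pI pI R]) (use i in auto)
    qed
    have "w (p i) < w (p (i+1))" if i: "i \<in> {1..<n}" and d: "\<sigma> (i+1) < \<sigma> i" for i
    proof (rule ccontr)
      assume "\<not> w (p i) < w (p (i+1))"
      then have eq: "w (p i) = w (p (i+1))" using le[OF i] by simp
      have I1: "i \<in> {1..n}" "i + 1 \<in> {1..n}" using i by auto
      have "R (cyc n (p i)) (cyc n (p (i+1)))" by (rule shift[OF pI[OF I1(1)] pI[OF I1(2)] Rp[OF i] eq])
      then have "\<pi> (cyc n (p i)) < \<pi> (cyc n (p (i+1)))"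
        using iffP[OF perm P cyc_in[OF n0 pI[OF I1(1)]] cyc_in[OF n0 pI[OF I1(2)]]] by blast
      then show False using d unfolding \<sigma>_def by simp
    qed
    then show "w \<in> Aset n \<pi> (Des n (\<pi> \<circ> cyc n \<circ> inv \<pi>))" using Aset_iff le by blast
  next
    assume "w \<in> Aset n \<pi> (Des n (\<pi> \<circ> cyc n \<circ> inv \<pi>))"
    then have A1: "\<And>i. i\<in>{1..<n} \<Longrightarrow> w (p i) \<le> w (p (i+1))"
      and A2: "\<And>i. i\<in>{1..<n} \<Longrightarrow> \<sigma> (i+1) < \<sigma> i \<Longrightarrow> w (p i) < w (p (i+1))"
      using Aset_iff by blast+
    have mono: "a + d \<le> n \<longrightarrow> w (p a) \<le> w (p (a+d))" if "a \<in> {1..n}" for a d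
    proof (induction d)
      case 0 then show ?case by simp
    next
      case (Suc d)
      show ?case
      proof
        assume "a + Suc d \<le> n"
        then have "w (p a) \<le> w (p (a+d))" using Suc by simp
        also have "\<dots> \<le> w (p (a + d + 1))" using A1[of "a+d"] that \<open>a + Suc d \<le> n\<close> by simp
        finally show "w (p a) \<le> w (p (a + Suc d))" by simp
      qed
    qed
    have mono': "w (p a) \<le> w (p b)" if "a \<in> {1..n}" "b \<in> {1..n}" "a \<le> b" for a b
      using mono[OF that(1), of "b - a"] that by simp
    have inc: "a + c + 1 \<le> n \<longrightarrow> w (p a) = w (p (a+c+1)) \<longrightarrow> \<sigma> a < \<sigma> (a+c+1)" if a: "a \<in> {1..n}" for a c
    proof (induction c)
      case 0
      show ?case
      proof (intro impI)
        assume h: "a + 0 + 1 \<le> n" "w (p a) = w (p (a + 0 + 1))"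
        have ia: "a \<in> {1..<n}" using a h by auto
        have "\<not> \<sigma> (a+1) < \<sigma> a" using A2[OF ia] h by auto
        moreover have "\<sigma> a \<noteq> \<sigma> (a+1)" using \<sigma>inj[of a "a+1"] a h by auto
        ultimately show "\<sigma> a < \<sigma> (a + 0 + 1)" by simp
      qed
    next
      case (Suc c)
      show ?case
      proof (intro impI)
        assume h: "a + Suc c + 1 \<le> n" "w (p a) = w (p (a + Suc c + 1))"
        have m1: "w (p a) \<le> w (p (a+c+1))" using mono'[of a "a+c+1"] a h by simp
        have m2: "w (p (a+c+1)) \<le> w (p (a+c+2))" using mono'[of "a+c+1" "a+c+2"] a h by simp
        have e1: "w (p a) = w (p (a+c+1))" and e2: "w (p (a+c+1)) = w (p (a+c+2))"
          using m1 m2 h(2) by (simp_all add: add.assoc)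
        have "\<sigma> a < \<sigma> (a+c+1)" using Suc h e1 by simp
        moreover have ia: "a + c + 1 \<in> {1..<n}" using h by auto
        then have "\<not> \<sigma> (a+c+1+1) < \<sigma> (a+c+1)" using A2[OF ia] e2 by (auto simp: add.assoc)
        ultimately show "\<sigma> a < \<sigma> (a + Suc c + 1)" by simp
      qed
    qed
    have adj: "\<sigma> a < \<sigma> b" if "a \<in> {1..n}" "b \<in> {1..n}" "a < b" "w (p a) = w (p b)" for a b
      using inc[OF that(1), of "b - a - 1"] that by simp
    have claim: "(\<exists>j<k. (\<forall>t<j. w ((cyc n ^^ t) x) = w ((cyc n ^^ t) y)) \<and> w ((cyc n ^^ j) x) < w ((cyc n ^^ j) y))
       \<or> ((\<forall>t<k. w ((cyc n ^^ t) x) = w ((cyc n ^^ t) y)) \<and> \<pi> ((cyc n ^^ k) x) < \<pi> ((cyc n ^^ k) y))"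
      if xy: "x \<in> {1..n}" "y \<in> {1..n}" "\<pi> x < \<pi> y" for x y k
    proof (induction k)
      case 0 then show ?case using xy by simp
    next
      case (Suc k)
      show ?case
      proof (cases "\<exists>j<k. (\<forall>t<j. w ((cyc n ^^ t) x) = w ((cyc n ^^ t) y)) \<and> w ((cyc n ^^ j) x) < w ((cyc n ^^ j) y)")
        case True then show ?thesis using less_SucI by blast
      next
        case False
        then have h: "\<forall>t<k. w ((cyc n ^^ t) x) = w ((cyc n ^^ t) y)" "\<pi> ((cyc n ^^ k) x) < \<pi> ((cyc n ^^ k) y)"
          using Suc by blast+
        define x' where "x' = (cyc n ^^ k) x"
        define y' where "y' = (cyc n ^^ k) y"
        have x'I: "x' \<in> {1..n}" and y'I: "y' \<in> {1..n}" unfolding x'_def y'_def using cyc_pow_in[OF n0] xy by auto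
        have "w (p (\<pi> x')) \<le> w (p (\<pi> y'))"
          using mono'[OF \<pi>I[OF x'I] \<pi>I[OF y'I]] h(2) unfolding x'_def y'_def by simp
        then have wle: "w x' \<le> w y'" by (simp add: p\<pi>)
        show ?thesis
        proof (cases "w x' < w y'")
          case True
          then show ?thesis using h(1) unfolding x'_def y'_def by blast
        next
          case False
          then have eq: "w x' = w y'" using wle by simp
          have "\<sigma> (\<pi> x') < \<sigma> (\<pi> y')"
            by (rule adj[OF \<pi>I[OF x'I] \<pi>I[OF y'I]]) (use h(2) eq in \<open>simp_all add: x'_def y'_def p\<pi>\<close>)
          then have "\<pi> ((cyc n ^^ Suc k) x) < \<pi> ((cyc n ^^ Suc k) y)"
            unfolding \<sigma>_def x'_def y'_def by (simp add: p\<pi>)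
          moreover have "\<forall>t<Suc k. w ((cyc n ^^ t) x) = w ((cyc n ^^ t) y)"
            using h(1) eq unfolding x'_def y'_def by (auto simp: less_Suc_eq)
          ultimately show ?thesis by blast
        qed
      qed
    qed
    have P: "\<forall>x\<in>{1..n}. \<forall>y\<in>{1..n}. \<pi> x < \<pi> y \<longrightarrow> R x y"
    proof (intro ballI impI)
      fix x y assume xy: "x \<in> {1..n}" "y \<in> {1..n}" "\<pi> x < \<pi> y"
      from claim[OF xy, of n] show "R x y"
      proof
        assume "\<exists>j<n. (\<forall>t<j. w ((cyc n ^^ t) x) = w ((cyc n ^^ t) y)) \<and> w ((cyc n ^^ j) x) < w ((cyc n ^^ j) y)"
        then show "R x y" using lexchar[OF xy(1,2)] by blast
      next
        assume h: "(\<forall>t<n. w ((cyc n ^^ t) x) = w ((cyc n ^^ t) y)) \<and> \<pi> ((cyc n ^^ n) x) < \<pi> ((cyc n ^^ n) y)"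
        have "rot n w x = rot n w y"
          by (rule nth_equalityI) (use h rot_nth[OF n0 xy(1)] rot_nth[OF n0 xy(2)] in \<open>auto simp: rot_len\<close>)
        then have "x = y" by (rule rot_inj[OF pr nc xy(1,2)])
        then show "R x y" using xy(3) by simp
      qed
    qed
    show "cstd n w = \<pi>" unfolding cstd_eq by (rule the1_equality[OF ex1]) (use perm P in blast)
  qed
qed

end
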